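(* Let $\ell\ge 2$ be an integer, let $Q_\ell$ be the $\ell$-dimensional hypercube graph (vertex set $\{0,1\}^\ell$, two vertices adjacent iff they differ in exactly one coordinate), and fix a proper edge coloring of $Q_\ell$ with $\ell$ colors $C_1,\dots,C_\ell$, so that every color class $E_j$ consists of $2^{\ell-1}$ edges. Let $\epsilon>0$ and consider the Bounded Color Matching instance on $Q_\ell$ with these color classes and color bounds $w_j=2(1-\epsilon)$ for all $j\in[\ell]$. Let $\psi$ be a positive integer and define the vector $\mathbf{y}$ indexed by subsets $I$ of the edge set $E=E(Q_\ell)$ by $$y_\emptyset=1,\qquad y_{\{e\}}=\rho:=\frac{1-\epsilon}{2^{\ell-2}+\psi(1-\epsilon)}\ \ \forall e\in E,\qquad y_I=0\ \ \forall I\subseteq E,\ |I|\ge 2.$$ Then, for any $\psi=o(2^{\ell-2})$, the vector $\mathbf{y}$ is feasible for the $\psi$-th level of the Sherali–Adams hierarchy applied to the natural LP relaxation $\mathcal{M}_c$ of this instance.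
   Context: Bounded Color Matching (BCM): given a simple undirected graph $G=(V,E)$ whose edge set is partitioned into color classes $E_1\cup\dots\cup E_k$, with bounds $w_j\ge 1$ (not necessarily integral), find a matching $M$ with $|M\cap E_j|\le w_j$ for all $j$ maximizing the total profit. Its natural LP relaxation is $\mathcal{M}_c=\{x\in[0,1]^E:\ \sum_{e\in\delta(v)}x_e\le 1\ \forall v\in V,\ \sum_{e\in E_j}x_e\le w_j\ \forall j\}$, where $\delta(v)$ is the set of edges incident to $v$. Sherali–Adams hierarchy: for a polytope $F_0=\{x\in[0,1]^n: a_i^Tx\le b_i,\ i\in[m]\}$ (the box constraints $x_j\ge 0$, $1-x_j\ge 0$ counted among its constraints), the level-$\psi$ lifted system has variables $y_Z$ for $Z\subseteq[n]$ with $y_\emptyset=1$, and for every pair of disjoint sets $\Gamma,\Delta\subseteq[n]$ with $|\Gamma|+|\Delta|\le\psi$ contains (i) for each constraint $b_i-a_i^Tx\ge 0$ the constraint $\sum_{H\subseteq\Delta}(-1)^{|H|}\big(b_i\,y_{\Gamma\cup H}-\sum_{j}a_{ij}\,y_{\Gamma\cup H\cup\{j\}}\big)\ge 0$ (this is the linearization of $(b_i-a_i^Tx)\prod_{\gamma\in\Gamma}x_\gamma\prod_{\delta\in\Delta}(1-x_\delta)\ge0$ using $x_i^2=x_i$ and replacing $\prod_{\zeta\in Z}x_\zeta$ by $y_Z$), and (ii) $\sum_{H\subseteq\Delta}(-1)^{|H|}y_{\Gamma\cup H}\ge 0$. A vector $\mathbf{y}$ is feasible for level $\psi$ if it satisfies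 all these constraints; the level-$\psi$ relaxation $F_\psi$ is the projection $\{x: \exists\, \mathbf{y}\text{ feasible},\ y_{\{i\}}=x_i\ \forall i\}$. *)

theory Defs
  imports Main "HOL-Library.Landau_Symbols"
begin

definition hc_vertices :: "nat \<Rightarrow> bool list set" where
  "hc_vertices l = {xs. length xs = l}"

definition hc_edges :: "nat \<Rightarrow> bool list set set" where
  "hc_edges l = {{u, v} | u v. u \<in> hc_vertices l \<and> v \<in> hc_vertices l
                    \<and> card {i. i < l \<and> u ! i \<noteq> v ! i} = 1}"

definition incident_edges :: "'v set set \<Rightarrow> 'v \<Rightarrow> 'v set set" where
  "incident_edges E v = {e \<in> E. v \<in> e}"

text \<open>Proper edge coloring of Q_l with the l colors 0,...,l-1 (standing for C_1..C_l):
  edges sharing an endpoint receive different colors.\<close>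
definition proper_edge_coloring :: "nat \<Rightarrow> (bool list set \<Rightarrow> nat) \<Rightarrow> bool" where
  "proper_edge_coloring l c \<longleftrightarrow>
     (\<forall>e \<in> hc_edges l. c e < l) \<and>
     (\<forall>e \<in> hc_edges l. \<forall>f \<in> hc_edges l. e \<noteq> f \<and> e \<inter> f \<noteq> {} \<longrightarrow> c e \<noteq> c f)"

text \<open>A constraint (a, b) stands for  b - a^T x \<ge> 0.\<close>

definition box_constraints :: "'a set \<Rightarrow> (('a \<Rightarrow> real) \<times> real) set" where
  "box_constraints N =
     {((\<lambda>i. if i = j then -1 else 0), 0) | j. j \<in> N} \<union>
     {((\<lambda>i. if i = j then 1 else 0), 1) | j. j \<in> N}"

definition bcm_constraints ::
  "'v set \<Rightarrow> 'v set set \<Rightarrow> 'c set \<Rightarrow> ('v set \<Rightarrow> 'c) \<Rightarrow> ('c \<Rightarrow> real)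
     \<Rightarrow> (('v set \<Rightarrow> real) \<times> real) set" where
  "bcm_constraints V E J col w =
     {((\<lambda>e. if e \<in> incident_edges E v then 1 else 0), 1) | v. v \<in> V} \<union>
     {((\<lambda>e. if e \<in> E \<and> col e = j then 1 else 0), w j) | j. j \<in> J} \<union>
     box_constraints E"

definition SA_feasible ::
  "'a set \<Rightarrow> (('a \<Rightarrow> real) \<times> real) set \<Rightarrow> nat \<Rightarrow> ('a set \<Rightarrow> real) \<Rightarrow> bool" where
  "SA_feasible N cons psi y \<longleftrightarrow>
     y {} = 1 \<and>
     (\<forall>\<Gamma> \<Delta>. \<Gamma> \<subseteq> N \<and> \<Delta> \<subseteq> N \<and> \<Gamma> \<inter> \<Delta> = {} \<and> card \<Gamma> + card \<Delta> \<le> psi \<longrightarrow>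
        (\<forall>(a, b) \<in> cons.
           (\<Sum>H \<in> Pow \<Delta>. (-1) ^ card H *
              (b * y (\<Gamma> \<union> H) - (\<Sum>j \<in> N. a j * y (\<Gamma> \<union> H \<union> {j})))) \<ge> 0) \<and>
        (\<Sum>H \<in> Pow \<Delta>. (-1) ^ card H * y (\<Gamma> \<union> H)) \<ge> 0)"

definition sa_vector :: "real \<Rightarrow> 'a set \<Rightarrow> real" where
  "sa_vector rho I = (if I = {} then 1 else if card I = 1 then rho else 0)"

end

theory Submission
  imports Defs
begin


lemma sa_big: "finite (K \<union> X) \<Longrightarrow> 2 \<le> card K \<Longrightarrow> sa_vector \<rho> (K \<union> X) = 0"
proof -
  assume f: "finite (K \<union> X)" and c: "2 \<le> card K"
  have "card K \<le> card (K \<union> X)" using f by (intro card_mono) auto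
  with c have "card (K \<union> X) \<noteq> 1" "K \<union> X \<noteq> {}" by auto
  thus ?thesis unfolding sa_vector_def by simp
qed

lemma sa_pair: "sa_vector \<rho> ({h} \<union> {j}) = (if j = h then \<rho> else 0)"
  unfolding sa_vector_def by auto

lemma pow_sum_le1:
  fixes g :: "'a set \<Rightarrow> real"
  assumes fin: "finite D" and z: "\<And>H. H \<subseteq> D \<Longrightarrow> 2 \<le> card H \<Longrightarrow> g H = 0"
  shows "(\<Sum>H\<in>Pow D. g H) = g {} + (\<Sum>h\<in>D. g {h})"
proof -
  let ?S = "insert {} ((\<lambda>h. {h}) ` D)"
  have "(\<Sum>H\<in>Pow D. g H) = (\<Sum>H\<in>?S. g H)"
  proof (rule sum.mono_neutral_right)
    show "finite (Pow D)" using fin by simp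
    show "?S \<subseteq> Pow D" by auto
    show "\<forall>H\<in>Pow D - ?S. g H = 0"
    proof
      fix H assume H: "H \<in> Pow D - ?S"
      hence "finite H" "H \<noteq> {}" "H \<subseteq> D" using fin finite_subset by auto
      moreover have "card H \<noteq> 1" using H by (auto simp: card_1_singleton_iff)
      ultimately have "2 \<le> card H" by (cases "card H") (auto)
      thus "g H = 0" using z H by auto
    qed
  qed
  also have "\<dots> = g {} + (\<Sum>H\<in>(\<lambda>h. {h}) ` D. g H)"
    using fin by (subst sum.insert) auto
  also have "(\<Sum>H\<in>(\<lambda>h. {h}) ` D. g H) = (\<Sum>h\<in>D. g {h})"
    by (subst sum.reindex) (auto simp: inj_on_def)
  finally show ?thesis .
qed

lemma inner1:
  assumes "finite N" "h \<in> N"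
  shows "(\<Sum>j\<in>N. a j * sa_vector \<rho> ({h} \<union> {j})) = \<rho> * a h"
proof -
  have "(\<Sum>j\<in>N. a j * sa_vector \<rho> ({h} \<union> {j})) = (\<Sum>j\<in>N. if j = h then a j * \<rho> else 0)"
    unfolding sa_pair by (rule sum.cong) auto
  also have "\<dots> = a h * \<rho>" using assms by (simp add: sum.delta')
  finally show ?thesis by simp
qed

lemma inner0:
  "(\<Sum>j\<in>N. a j * sa_vector \<rho> ({} \<union> {} \<union> {j})) = \<rho> * sum a N"
  by (simp add: sa_vector_def sum_distrib_left mult.commute)

lemma caseBig:
  assumes fin: "finite N" and G: "\<Gamma> \<subseteq> N" "\<Delta> \<subseteq> N" and c: "2 \<le> card \<Gamma>"
  shows "(\<Sum>H\<in>Pow \<Delta>. (-1) ^ card H * (b * sa_vector \<rho> (\<Gamma> \<union> H) -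
            (\<Sum>j\<in>N. a j * sa_vector \<rho> (\<Gamma> \<union> H \<union> {j})))) = 0"
    and "(\<Sum>H\<in>Pow \<Delta>. (-1) ^ card H * sa_vector \<rho> (\<Gamma> \<union> H)) = (0::real)"
proof -
  have f: "finite (\<Gamma> \<union> X)" if "X \<subseteq> N" for X using fin G that finite_subset by (metis le_sup_iff)
  show "(\<Sum>H\<in>Pow \<Delta>. (-1) ^ card H * sa_vector \<rho> (\<Gamma> \<union> H)) = (0::real)"
    by (rule sum.neutral) (use G c in \<open>auto intro!: sa_big f\<close>)
  show "(\<Sum>H\<in>Pow \<Delta>. (-1) ^ card H * (b * sa_vector \<rho> (\<Gamma> \<union> H) -
            (\<Sum>j\<in>N. a j * sa_vector \<rho> (\<Gamma> \<union> H \<union> {j})))) = 0"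
  proof (rule sum.neutral, rule ballI)
    fix H assume H: "H \<in> Pow \<Delta>"
    have 1: "sa_vector \<rho> (\<Gamma> \<union> H) = 0" using H G c by (auto intro!: sa_big f)
    have 2: "sa_vector \<rho> (\<Gamma> \<union> H \<union> {j}) = 0" if "j \<in> N" for j
      using sa_big[of \<Gamma> "H \<union> {j}"] H G c that f[of "H \<union> {j}"] by (auto simp: Un_assoc)
    show "(-1) ^ card H * (b * sa_vector \<rho> (\<Gamma> \<union> H) -
            (\<Sum>j\<in>N. a j * sa_vector \<rho> (\<Gamma> \<union> H \<union> {j}))) = 0"
      using 1 2 by simp
  qed
qed

lemma caseOne:
  assumes fin: "finite N" and g: "g \<in> N" and D: "\<Delta> \<subseteq> N" "g \<notin> \<Delta>"
  shows "(\<Sum>H\<in>Pow \<Delta>. (-1) ^ card H * (b * sa_vector \<rho> ({g} \<union> H) -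
            (\<Sum>j\<in>N. a j * sa_vector \<rho> ({g} \<union> H \<union> {j})))) = \<rho> * (b - a g)"
    and "(\<Sum>H\<in>Pow \<Delta>. (-1) ^ card H * sa_vector \<rho> ({g} \<union> H)) = \<rho>"
proof -
  have fD: "finite \<Delta>" using fin D finite_subset by auto
  have c2: "2 \<le> card ({g} \<union> H)" if "H \<subseteq> \<Delta>" "H \<noteq> {}" for H
  proof -
    have "finite H" using that fD finite_subset by auto
    moreover have "g \<notin> H" using that D by auto
    ultimately have "card ({g} \<union> H) = Suc (card H)" by simp
    moreover have "card H \<noteq> 0" using that \<open>finite H\<close> by auto
    ultimately show ?thesis by simp
  qed
  have z: "sa_vector \<rho> ({g} \<union> H \<union> X) = 0" if "H \<subseteq> \<Delta>" "H \<noteq> {}" "finite X" for H X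
    using sa_big[of "{g} \<union> H" X] c2[OF that(1,2)] that fD finite_subset
    by (metis finite_Un finite.emptyI finite.insertI)
  have "(\<Sum>H\<in>Pow \<Delta>. (-1) ^ card H * (b * sa_vector \<rho> ({g} \<union> H) -
            (\<Sum>j\<in>N. a j * sa_vector \<rho> ({g} \<union> H \<union> {j})))) =
        (\<Sum>H\<in>Pow \<Delta>. if H = {} then \<rho> * (b - a g) else 0)"
  proof (rule sum.cong[OF refl])
    fix H assume H: "H \<in> Pow \<Delta>"
    show "(-1) ^ card H * (b * sa_vector \<rho> ({g} \<union> H) -
            (\<Sum>j\<in>N. a j * sa_vector \<rho> ({g} \<union> H \<union> {j}))) =
          (if H = {} then \<rho> * (b - a g) else 0)"
    proof (cases "H = {}")
      case True
      thus ?thesis using inner1[OF fin g, of a \<rho>] by (simp add: sa_vector_def algebra_simps)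
    next
      case False
      have "sa_vector \<rho> ({g} \<union> H) = 0" using z[of H "{}"] H False by simp
      moreover have "sa_vector \<rho> ({g} \<union> H \<union> {j}) = 0" for j using z[of H "{j}"] H False by simp
      ultimately show ?thesis using False by simp
    qed
  qed
  also have "\<dots> = \<rho> * (b - a g)" using fD by (simp add: sum.delta)
  finally show "(\<Sum>H\<in>Pow \<Delta>. (-1) ^ card H * (b * sa_vector \<rho> ({g} \<union> H) -
            (\<Sum>j\<in>N. a j * sa_vector \<rho> ({g} \<union> H \<union> {j})))) = \<rho> * (b - a g)" .
  have "(\<Sum>H\<in>Pow \<Delta>. (-1) ^ card H * sa_vector \<rho> ({g} \<union> H)) =
        (\<Sum>H\<in>Pow \<Delta>. if H = {} then \<rho> else 0)"
  proof (rule sum.cong[OF refl])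
    fix H assume H: "H \<in> Pow \<Delta>"
    show "(-1) ^ card H * sa_vector \<rho> ({g} \<union> H) = (if H = {} then \<rho> else 0)"
      using z[of H "{}"] H by (cases "H = {}") (auto simp: sa_vector_def)
  qed
  also have "\<dots> = \<rho>" using fD by (simp add: sum.delta)
  finally show "(\<Sum>H\<in>Pow \<Delta>. (-1) ^ card H * sa_vector \<rho> ({g} \<union> H)) = \<rho>" .
qed

lemma caseZero:
  assumes fin: "finite N" and D: "\<Delta> \<subseteq> N"
  shows "(\<Sum>H\<in>Pow \<Delta>. (-1) ^ card H * (b * sa_vector \<rho> ({} \<union> H) -
            (\<Sum>j\<in>N. a j * sa_vector \<rho> ({} \<union> H \<union> {j})))) =
           b - \<rho> * sum a N - \<rho> * (\<Sum>h\<in>\<Delta>. b - a h)"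
    and "(\<Sum>H\<in>Pow \<Delta>. (-1) ^ card H * sa_vector \<rho> ({} \<union> H)) = 1 - \<rho> * card \<Delta>"
proof -
  have fD: "finite \<Delta>" using fin D finite_subset by auto
  have z: "sa_vector \<rho> (H \<union> X) = 0" if "H \<subseteq> \<Delta>" "2 \<le> card H" "finite X" for H X
    using sa_big[of H X] that fD finite_subset by (metis finite_Un)
  have "(\<Sum>H\<in>Pow \<Delta>. (-1) ^ card H * (b * sa_vector \<rho> ({} \<union> H) -
            (\<Sum>j\<in>N. a j * sa_vector \<rho> ({} \<union> H \<union> {j})))) =
        (b - (\<Sum>j\<in>N. a j * sa_vector \<rho> ({} \<union> {} \<union> {j}))) +
        (\<Sum>h\<in>\<Delta>. (-1) * (b * \<rho> - (\<Sum>j\<in>N. a j * sa_vector \<rho> ({h} \<union> {j}))))"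
    apply (subst pow_sum_le1[OF fD])
    subgoal for H using z[of H "{}"] z[of H "{j}" for j] by simp
    by (simp add: sa_vector_def)
  also have "\<dots> = b - \<rho> * sum a N - \<rho> * (\<Sum>h\<in>\<Delta>. b - a h)"
  proof -
    have "(\<Sum>h\<in>\<Delta>. (-1) * (b * \<rho> - (\<Sum>j\<in>N. a j * sa_vector \<rho> ({h} \<union> {j})))) =
          (\<Sum>h\<in>\<Delta>. - (\<rho> * (b - a h)))"
    proof (rule sum.cong[OF refl])
      fix h assume "h \<in> \<Delta>"
      hence "h \<in> N" using D by auto
      thus "(-1) * (b * \<rho> - (\<Sum>j\<in>N. a j * sa_vector \<rho> ({h} \<union> {j}))) = - (\<rho> * (b - a h))"
        by (simp only: inner1[OF fin]) (simp add: algebra_simps)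
    qed
    thus ?thesis by (simp only: inner0) (simp add: sum_negf sum_distrib_left)
  qed
  finally show "(\<Sum>H\<in>Pow \<Delta>. (-1) ^ card H * (b * sa_vector \<rho> ({} \<union> H) -
            (\<Sum>j\<in>N. a j * sa_vector \<rho> ({} \<union> H \<union> {j})))) =
           b - \<rho> * sum a N - \<rho> * (\<Sum>h\<in>\<Delta>. b - a h)" .
  show "(\<Sum>H\<in>Pow \<Delta>. (-1) ^ card H * sa_vector \<rho> ({} \<union> H)) = 1 - \<rho> * card \<Delta>"
    apply (subst pow_sum_le1[OF fD])
    subgoal for H using z[of H "{}"] by simp
    by (simp add: sa_vector_def)
qed

lemma SA_general:
  fixes N :: "'a set" and psi :: nat and \<rho> :: real
  assumes fin: "finite N" and rho0: "0 \<le> \<rho>" and rpsi: "\<rho> * psi \<le> 1"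
    and cons: "\<And>a b. (a, b) \<in> cons \<Longrightarrow>
       0 \<le> b \<and> (\<forall>j\<in>N. a j \<le> b) \<and> \<rho> * (\<Sum>j\<in>N. max (a j) 0) \<le> b * (1 - \<rho> * psi)"
  shows "SA_feasible N cons psi (sa_vector \<rho>)"
  unfolding SA_feasible_def
proof (intro conjI allI impI)
  show "sa_vector \<rho> {} = 1" by (simp add: sa_vector_def)
  fix \<Gamma> \<Delta> assume A: "\<Gamma> \<subseteq> N \<and> \<Delta> \<subseteq> N \<and> \<Gamma> \<inter> \<Delta> = {} \<and> card \<Gamma> + card \<Delta> \<le> psi"
  hence G: "\<Gamma> \<subseteq> N" and D: "\<Delta> \<subseteq> N" and disj: "\<Gamma> \<inter> \<Delta> = {}" and cd: "card \<Gamma> + card \<Delta> \<le> psi"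
    by auto
  have fG: "finite \<Gamma>" using G fin finite_subset by auto
  have fD: "finite \<Delta>" using D fin finite_subset by auto
  consider "\<Gamma> = {}" | g where "\<Gamma> = {g}" | "2 \<le> card \<Gamma>"
  proof -
    have "card \<Gamma> = 0 \<or> card \<Gamma> = 1 \<or> 2 \<le> card \<Gamma>" by arith
    thus thesis using fG that by (auto simp: card_1_singleton_iff)
  qed
  then have "(\<forall>(a, b)\<in>cons. 0 \<le> (\<Sum>H\<in>Pow \<Delta>. (- 1) ^ card H * (b * sa_vector \<rho> (\<Gamma> \<union> H) -
              (\<Sum>j\<in>N. a j * sa_vector \<rho> (\<Gamma> \<union> H \<union> {j}))))) \<and> (0 \<le> (\<Sum>H\<in>Pow \<Delta>. (- 1) ^ card H * sa_vector \<rho> (\<Gamma> \<union> H)))"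
  proof cases
    case 1
    have cD: "real (card \<Delta>) \<le> psi" using cd 1 by simp
    have rD: "\<rho> * card \<Delta> \<le> \<rho> * psi" using cD rho0 by (rule mult_left_mono)
    have P2: "0 \<le> (\<Sum>H\<in>Pow \<Delta>. (- 1) ^ card H * sa_vector \<rho> (\<Gamma> \<union> H))"
      using caseZero(2)[OF fin D, of \<rho>] 1 rD rpsi by simp
    have P1: "\<forall>(a, b)\<in>cons. 0 \<le> (\<Sum>H\<in>Pow \<Delta>. (- 1) ^ card H * (b * sa_vector \<rho> (\<Gamma> \<union> H) -
              (\<Sum>j\<in>N. a j * sa_vector \<rho> (\<Gamma> \<union> H \<union> {j}))))"
    proof (intro ballI, clarify)
      fix a b assume ab: "(a, b) \<in> cons"
      note c = cons[OF ab]
      have e: "b - \<rho> * sum a N - \<rho> * (\<Sum>h\<in>\<Delta>. b - a h) =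
               b * (1 - \<rho> * card \<Delta>) - \<rho> * sum a (N - \<Delta>)"
        using fD by (simp add: sum_diff[OF fin D] sum_subtractf algebra_simps)
      have s1: "sum a (N - \<Delta>) \<le> (\<Sum>j\<in>N - \<Delta>. max (a j) 0)" by (rule sum_mono) simp
      also have "\<dots> \<le> (\<Sum>j\<in>N. max (a j) 0)" using fin by (intro sum_mono2) auto
      finally have s: "\<rho> * sum a (N - \<Delta>) \<le> \<rho> * (\<Sum>j\<in>N. max (a j) 0)"
        using rho0 by (rule mult_left_mono)
      have "b * (1 - \<rho> * psi) \<le> b * (1 - \<rho> * card \<Delta>)"
        using c rD by (intro mult_left_mono) auto
      hence "0 \<le> b - \<rho> * sum a N - \<rho> * (\<Sum>h\<in>\<Delta>. b - a h)" using e s c by linarith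
      thus "0 \<le> (\<Sum>H\<in>Pow \<Delta>. (- 1) ^ card H * (b * sa_vector \<rho> (\<Gamma> \<union> H) -
              (\<Sum>j\<in>N. a j * sa_vector \<rho> (\<Gamma> \<union> H \<union> {j}))))"
        using caseZero(1)[OF fin D, of b \<rho> a] 1 by simp
    qed
    show ?thesis using P1 P2 by blast
  next
    case 2
    have g: "g \<in> N" "g \<notin> \<Delta>" using 2 G disj by auto
    have P2: "0 \<le> (\<Sum>H\<in>Pow \<Delta>. (- 1) ^ card H * sa_vector \<rho> (\<Gamma> \<union> H))"
      using caseOne(2)[OF fin g(1) D g(2), of \<rho>] 2 rho0 by simp
    have P1: "\<forall>(a, b)\<in>cons. 0 \<le> (\<Sum>H\<in>Pow \<Delta>. (- 1) ^ card H * (b * sa_vector \<rho> (\<Gamma> \<union> H) -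
              (\<Sum>j\<in>N. a j * sa_vector \<rho> (\<Gamma> \<union> H \<union> {j}))))"
    proof (intro ballI, clarify)
      fix a b assume ab: "(a, b) \<in> cons"
      have "a g \<le> b" using cons[OF ab] g by auto
      hence "0 \<le> \<rho> * (b - a g)" using rho0 by simp
      thus "0 \<le> (\<Sum>H\<in>Pow \<Delta>. (- 1) ^ card H * (b * sa_vector \<rho> (\<Gamma> \<union> H) -
              (\<Sum>j\<in>N. a j * sa_vector \<rho> (\<Gamma> \<union> H \<union> {j}))))"
        using caseOne(1)[OF fin g(1) D g(2), of b \<rho> a] 2 by simp
    qed
    show ?thesis using P1 P2 by blast
  next
    case 3
    have P2: "0 \<le> (\<Sum>H\<in>Pow \<Delta>. (- 1) ^ card H * sa_vector \<rho> (\<Gamma> \<union> H))"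
      using caseBig(2)[OF fin G D 3] by simp
    have P1: "\<forall>(a, b)\<in>cons. 0 \<le> (\<Sum>H\<in>Pow \<Delta>. (- 1) ^ card H * (b * sa_vector \<rho> (\<Gamma> \<union> H) -
              (\<Sum>j\<in>N. a j * sa_vector \<rho> (\<Gamma> \<union> H \<union> {j}))))"
      using caseBig(1)[OF fin G D 3] by simp
    show ?thesis using P1 P2 by blast
  qed
  thus "\<forall>(a, b)\<in>cons. 0 \<le> (\<Sum>H\<in>Pow \<Delta>. (- 1) ^ card H * (b * sa_vector \<rho> (\<Gamma> \<union> H) -
              (\<Sum>j\<in>N. a j * sa_vector \<rho> (\<Gamma> \<union> H \<union> {j}))))" "0 \<le> (\<Sum>H\<in>Pow \<Delta>. (- 1) ^ card H * sa_vector \<rho> (\<Gamma> \<union> H))" by auto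
qed



lemma hcV_eq: "hc_vertices l = {xs. set xs \<subseteq> (UNIV::bool set) \<and> length xs = l}"
  by (auto simp: hc_vertices_def)

lemma hcV_fin: "finite (hc_vertices l)"
  unfolding hcV_eq by (rule finite_lists_length_eq) simp

lemma hcV_card: "card (hc_vertices l) = 2 ^ l"
  unfolding hcV_eq by (subst card_lists_length_eq) auto

lemma hcE_sub: "hc_edges l \<subseteq> Pow (hc_vertices l)"
  by (auto simp: hc_edges_def)

lemma hcE_fin: "finite (hc_edges l)"
  using hcE_sub hcV_fin by (metis finite_Pow_iff finite_subset)

lemma hcE_card2: "e \<in> hc_edges l \<Longrightarrow> card e = 2"
proof -
  assume "e \<in> hc_edges l"
  then obtain u v where e: "e = {u, v}" and c: "card {i. i < l \<and> u ! i \<noteq> v ! i} = 1"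
    by (auto simp: hc_edges_def)
  have "u \<noteq> v" using c by auto
  thus ?thesis using e by simp
qed

lemma deg_le:
  assumes "proper_edge_coloring l c"
  shows "card (incident_edges (hc_edges l) v) \<le> l"
proof -
  have "inj_on c (incident_edges (hc_edges l) v)"
    using assms unfolding proper_edge_coloring_def inj_on_def incident_edges_def by blast
  moreover have "c ` incident_edges (hc_edges l) v \<subseteq> {..<l}"
    using assms unfolding proper_edge_coloring_def incident_edges_def by auto
  ultimately have "card (incident_edges (hc_edges l) v) \<le> card {..<l}"
    by (intro card_inj_on_le) auto
  thus ?thesis by simp
qed

lemma color_le:
  assumes "proper_edge_coloring l c"
  shows "2 * card {e \<in> hc_edges l. c e = j} \<le> 2 ^ l"
proof -
  let ?C = "{e \<in> hc_edges l. c e = j}"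
  have fC: "finite ?C" using hcE_fin by simp
  have pw: "pairwise disjnt ?C"
    using assms unfolding proper_edge_coloring_def pairwise_def disjnt_def by blast
  have fe: "\<And>e. e \<in> ?C \<Longrightarrow> finite e"
    using hcE_card2 by (metis (no_types, lifting) card.infinite mem_Collect_eq zero_neq_numeral)
  have "card (\<Union>?C) = sum card ?C" by (rule card_Union_disjoint[OF pw fe])
  also have "\<dots> = sum (\<lambda>_. 2) ?C" by (rule sum.cong) (auto simp: hcE_card2)
  also have "\<dots> = 2 * card ?C" by simp
  finally have 1: "card (\<Union>?C) = 2 * card ?C" .
  have "\<Union>?C \<subseteq> hc_vertices l" using hcE_sub by auto
  hence "card (\<Union>?C) \<le> card (hc_vertices l)" using hcV_fin by (rule card_mono[rotated])
  thus ?thesis using 1 hcV_card by simp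
qed

lemma pow_ge: "4 \<le> l \<Longrightarrow> l \<le> (2::nat) ^ (l - 2)"
proof (induction l rule: dec_induct)
  case base then show ?case by simp
next
  case (step n)
  have "Suc n - 2 = Suc (n - 2)" using step by simp
  moreover have "1 \<le> (2::nat) ^ (n - 2)" by simp
  ultimately show ?case using step by simp
qed

lemma rho_ineq:
  fixes q t p X b :: real
  assumes "0 < q" "0 < t" "0 \<le> p" "t * X \<le> b * q"
  shows "(t / (q + p * t)) * X \<le> b * (1 - (t / (q + p * t)) * p)"
proof -
  have D: "0 < q + p * t" using assms by (simp add: add_pos_nonneg)
  have "1 - (t / (q + p * t)) * p = q / (q + p * t)" using D by (simp add: field_simps)
  hence "b * (1 - (t / (q + p * t)) * p) = (b * q) / (q + p * t)" by simp
  moreover have "(t / (q + p * t)) * X = (t * X) / (q + p * t)" by simp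
  ultimately show ?thesis using assms(4) D by (simp add: divide_right_mono)
qed

lemma sum_ind: "finite E \<Longrightarrow> (\<Sum>e\<in>E. max (if P e then 1 else 0) (0::real)) = card {e\<in>E. P e}"
proof -
  assume f: "finite E"
  have "(\<Sum>e\<in>E. max (if P e then 1 else 0) (0::real)) = (\<Sum>e\<in>E. if P e then 1 else 0)"
    by (rule sum.cong) auto
  also have "\<dots> = (\<Sum>e\<in>{e\<in>E. P e}. 1)" using f by (simp add: sum.inter_filter[symmetric])
  finally show ?thesis by simp
qed



lemma fixed_l:
  fixes \<epsilon> :: real and p :: nat
  assumes e0: "0 < \<epsilon>" and e1: "2 * (1 - \<epsilon>) \<ge> 1" and l4: "4 \<le> l"
    and pc: "proper_edge_coloring l c"
  shows "SA_feasible (hc_edges l)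
                (bcm_constraints (hc_vertices l) (hc_edges l) {..<l} c (\<lambda>j. 2 * (1 - \<epsilon>)))
                p
                (sa_vector ((1 - \<epsilon>) / (2 ^ (l - 2) + real p * (1 - \<epsilon>))))"
proof -
  define t where "t = 1 - \<epsilon>"
  define q :: real where "q = 2 ^ (l - 2)"
  have t0: "0 < t" "t \<le> 1" "1 \<le> 2 * t" using e0 e1 by (auto simp: t_def)
  have q1: "1 \<le> q" by (simp add: q_def)
  have lq: "real l \<le> q" using pow_ge[OF l4] unfolding q_def
    by (metis of_nat_le_iff of_nat_numeral of_nat_power)
  have q4: "(2::real) ^ l = 4 * q"
  proof -
    have "l = (l - 2) + 2" using l4 by simp
    hence "(2::real) ^ l = 2 ^ (l - 2) * 2 ^ 2" by (metis power_add)
    thus ?thesis unfolding q_def by simp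
  qed
  let ?r = "t / (q + real p * t)"
  have ineq: "?r * X \<le> b * (1 - ?r * p)" if "t * X \<le> b * q" for X b
    using rho_ineq[of q t "real p" X b] that t0 q1 by simp
  have r0: "0 \<le> ?r" using t0 q1 by simp
  have rp: "?r * p \<le> 1" using ineq[of 0 1] q1 by simp
  show ?thesis unfolding t_def[symmetric] q_def[symmetric]
  proof (rule SA_general[OF hcE_fin r0 rp])
    fix a b assume ab: "(a, b) \<in> bcm_constraints (hc_vertices l) (hc_edges l) {..<l} c (\<lambda>j. 2 * t)"
    let ?E = "hc_edges l"
    consider (V) v where "a = (\<lambda>e. if e \<in> incident_edges ?E v then 1 else 0)" "b = 1"
      | (C) j where "a = (\<lambda>e. if e \<in> ?E \<and> c e = j then 1 else 0)" "b = 2 * t"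
      | (L) j where "a = (\<lambda>i. if i = j then -1 else 0)" "b = 0" "j \<in> ?E"
      | (U) j where "a = (\<lambda>i. if i = j then 1 else 0)" "b = 1" "j \<in> ?E"
      using ab unfolding bcm_constraints_def box_constraints_def by blast
    then show "0 \<le> b \<and> (\<forall>j\<in>?E. a j \<le> b) \<and> ?r * (\<Sum>j\<in>?E. max (a j) 0) \<le> b * (1 - ?r * p)"
    proof cases
      case V
      have "card {e \<in> ?E. e \<in> incident_edges ?E v} \<le> card (incident_edges ?E v)"
        by (rule card_mono) (auto simp: incident_edges_def hcE_fin)
      also have "\<dots> \<le> l" by (rule deg_le[OF pc])
      finally have X: "real (card {e \<in> ?E. e \<in> incident_edges ?E v}) \<le> q" using lq by linarith
      have "t * real (card {e \<in> ?E. e \<in> incident_edges ?E v}) \<le> 1 * real (card {e \<in> ?E. e \<in> incident_edges ?E v})"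
        using t0 by (intro mult_right_mono) auto
      hence "t * real (card {e \<in> ?E. e \<in> incident_edges ?E v}) \<le> 1 * q" using X by linarith
      moreover have "(\<Sum>j\<in>?E. max (a j) 0) = real (card {e \<in> ?E. e \<in> incident_edges ?E v})"
        unfolding V(1) by (rule sum_ind[OF hcE_fin])
      ultimately show ?thesis using V ineq[of _ 1] by auto
    next
      case C
      have "2 * card {e \<in> ?E. c e = j} \<le> 2 ^ l" by (rule color_le[OF pc])
      hence "real (2 * card {e \<in> ?E. c e = j}) \<le> real (2 ^ l)" by (simp only: of_nat_le_iff)
      hence "2 * real (card {e \<in> ?E. c e = j}) \<le> 4 * q" using q4 by simp
      hence "real (card {e \<in> ?E. c e = j}) \<le> 2 * q" by simp
      hence "t * real (card {e \<in> ?E. c e = j}) \<le> t * (2 * q)" using t0 by simp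
      hence "t * real (card {e \<in> ?E. e \<in> ?E \<and> c e = j}) \<le> (2 * t) * q" by simp
      moreover have "(\<Sum>j\<in>?E. max (a j) 0) = real (card {e \<in> ?E. e \<in> ?E \<and> c e = j})"
        unfolding C(1) by (rule sum_ind[OF hcE_fin])
      ultimately show ?thesis using C ineq[of _ "2 * t"] t0 by auto
    next
      case L
      have "(\<Sum>i\<in>?E. max (a i) 0) = 0" using L by (intro sum.neutral) auto
      thus ?thesis using L by auto
    next
      case U
      have "(\<Sum>i\<in>?E. max (a i) 0) = 1" using U by (simp add: hcE_fin)
      moreover have "t * 1 \<le> 1 * q" using t0 q1 by simp
      ultimately show ?thesis using U ineq[of 1 1] by auto
    qed
  qed
qed

theorem mainTheorem1:
  fixes \<epsilon> :: real and \<psi> :: "nat \<Rightarrow> nat"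
  assumes "0 < \<epsilon>" and "2 * (1 - \<epsilon>) \<ge> 1"
    and "\<forall>l. \<psi> l \<ge> 1"
    and "(\<lambda>l. real (\<psi> l)) \<in> o(\<lambda>l. 2 ^ (l - 2))"
  shows "\<forall>\<^sub>F l in at_top. l \<ge> 2 \<and>
           (\<forall>c. proper_edge_coloring l c \<longrightarrow>
              SA_feasible (hc_edges l)
                (bcm_constraints (hc_vertices l) (hc_edges l) {..<l} c (\<lambda>j. 2 * (1 - \<epsilon>)))
                (\<psi> l)
                (sa_vector ((1 - \<epsilon>) / (2 ^ (l - 2) + real (\<psi> l) * (1 - \<epsilon>)))))"
proof -
  have "\<forall>\<^sub>F l in at_top. (4::nat) \<le> l" by (rule eventually_ge_at_top)
  thus ?thesis
  proof (rule eventually_mono)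
    fix l :: nat assume l4: "4 \<le> l"
    show "l \<ge> 2 \<and>
           (\<forall>c. proper_edge_coloring l c \<longrightarrow>
              SA_feasible (hc_edges l)
                (bcm_constraints (hc_vertices l) (hc_edges l) {..<l} c (\<lambda>j. 2 * (1 - \<epsilon>)))
                (\<psi> l)
                (sa_vector ((1 - \<epsilon>) / (2 ^ (l - 2) + real (\<psi> l) * (1 - \<epsilon>)))))"
      using l4 fixed_l[OF assms(1,2) l4] by auto
  qed
qed

end
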